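(* Let $p$ be an odd prime and $G=\langle a,b : (a[a^p,b])^p,\ b^p\rangle$. Then $a^p\neq 1$ in $G$; consequently the epimorphism $G\to C_p*C_p=\langle\alpha,\beta:\alpha^p,\beta^p\rangle$, $a\mapsto\alpha$, $b\mapsto\beta$, has nontrivial kernel, and $G$ is not residually nilpotent.
   Context: Commutator convention: $[x,y]=x^{-1}y^{-1}xy$. A group $G$ is residually nilpotent if $\bigcap_k\gamma_k(G)=\{1\}$, where $\gamma_1(G)=G$, $\gamma_k(G)=[G,\gamma_{k-1}(G)]$. *)

theory Defs
  imports "HOL-Algebra.Algebra"
begin

text \<open>A letter is a pair (generator, inverted?); (g, False) is g, (g, True) is g^-1.\<close>

fun red_cons :: "('g \<times> bool) \<Rightarrow> ('g \<times> bool) list \<Rightarrow> ('g \<times> bool) list" where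
  "red_cons x [] = [x]"
| "red_cons x (y # ys) = (if fst x = fst y \<and> snd x \<noteq> snd y then ys else x # y # ys)"

definition normalize :: "('g \<times> bool) list \<Rightarrow> ('g \<times> bool) list" where
  "normalize w = foldr red_cons w []"

definition reduced :: "('g \<times> bool) list \<Rightarrow> bool" where
  "reduced w \<longleftrightarrow> (\<forall>i. Suc i < length w \<longrightarrow>
      \<not> (fst (w ! i) = fst (w ! Suc i) \<and> snd (w ! i) \<noteq> snd (w ! Suc i)))"

definition free_group :: "'g set \<Rightarrow> (('g \<times> bool) list) monoid" where
  "free_group S = \<lparr> carrier = {w. fst ` set w \<subseteq> S \<and> reduced w},
                    monoid.mult = (\<lambda>x y. normalize (x @ y)),
                    monoid.one = [] \<rparr>"

definition comm :: "('a, 'b) monoid_scheme \<Rightarrow> 'a \<Rightarrow> 'a \<Rightarrow> 'a" where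
  "comm G x y = inv\<^bsub>G\<^esub> x \<otimes>\<^bsub>G\<^esub> inv\<^bsub>G\<^esub> y \<otimes>\<^bsub>G\<^esub> x \<otimes>\<^bsub>G\<^esub> y"

definition normal_closure :: "('a, 'b) monoid_scheme \<Rightarrow> 'a set \<Rightarrow> 'a set" where
  "normal_closure G A =
     generate G {g \<otimes>\<^bsub>G\<^esub> r \<otimes>\<^bsub>G\<^esub> inv\<^bsub>G\<^esub> g | g r. g \<in> carrier G \<and> r \<in> A}"

definition presented_group :: "'g set \<Rightarrow> ('g \<times> bool) list set \<Rightarrow> (('g \<times> bool) list set) monoid" where
  "presented_group S R = free_group S Mod normal_closure (free_group S) R"

definition pres_class :: "'g set \<Rightarrow> ('g \<times> bool) list set \<Rightarrow> ('g \<times> bool) list \<Rightarrow> ('g \<times> bool) list set" where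
  "pres_class S R w = normal_closure (free_group S) R #>\<^bsub>free_group S\<^esub> w"

text \<open>Lower central series, shifted: lower_central G k = gamma_(k+1)(G).
  gamma_1 = G, gamma_(k+1) = [G, gamma_k].\<close>
fun lower_central :: "('a, 'b) monoid_scheme \<Rightarrow> nat \<Rightarrow> 'a set" where
  "lower_central G 0 = carrier G"
| "lower_central G (Suc k) = generate G {comm G x y | x y. x \<in> carrier G \<and> y \<in> lower_central G k}"

definition residually_nilpotent :: "('a, 'b) monoid_scheme \<Rightarrow> bool" where
  "residually_nilpotent G \<longleftrightarrow> (\<Inter>k. lower_central G k) = {\<one>\<^bsub>G\<^esub>}"

text \<open>Two generators: False is a (resp. alpha), True is b (resp. beta).\<close>
abbreviation F2 :: "((bool \<times> bool) list) monoid" where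
  "F2 \<equiv> free_group (UNIV :: bool set)"

definition gen_a :: "(bool \<times> bool) list" where "gen_a = [(False, False)]"
definition gen_b :: "(bool \<times> bool) list" where "gen_b = [(True, False)]"

definition rels_G :: "nat \<Rightarrow> (bool \<times> bool) list set" where
  "rels_G p = { (gen_a \<otimes>\<^bsub>F2\<^esub> comm F2 (gen_a [^]\<^bsub>F2\<^esub> p) gen_b) [^]\<^bsub>F2\<^esub> p,
                gen_b [^]\<^bsub>F2\<^esub> p }"

definition rels_C :: "nat \<Rightarrow> (bool \<times> bool) list set" where
  "rels_C p = { gen_a [^]\<^bsub>F2\<^esub> p, gen_b [^]\<^bsub>F2\<^esub> p }"

definition G_grp :: "nat \<Rightarrow> ((bool \<times> bool) list set) monoid" where
  "G_grp p = presented_group UNIV (rels_G p)"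

definition CpCp :: "nat \<Rightarrow> ((bool \<times> bool) list set) monoid" where
  "CpCp p = presented_group UNIV (rels_C p)"

end

theory Submission
  imports Defs "HOL-Number_Theory.Cong"
begin

definition flipl :: "('g \<times> bool) \<Rightarrow> ('g \<times> bool)" where "flipl c = (fst c, \<not> snd c)"

lemma cancel_iff: "(fst x = fst y \<and> snd x \<noteq> snd y) \<longleftrightarrow> y = flipl x"
  by (cases x; cases y) (auto simp: flipl_def)
declare red_cons.simps(2)[simp del]

lemma flipl_flipl[simp]: "flipl (flipl c) = c" by (simp add: flipl_def)
lemma fst_flipl[simp]: "fst (flipl c) = fst c" by (simp add: flipl_def)
lemma snd_flipl[simp]: "snd (flipl c) = (\<not> snd c)" by (simp add: flipl_def)

lemma reduced_Nil[simp]: "reduced []" by (simp add: reduced_def)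
lemma reduced_single[simp]: "reduced [x]" by (simp add: reduced_def)
lemma reduced_Cons2: "reduced (x # y # ys) \<longleftrightarrow> y \<noteq> flipl x \<and> reduced (y # ys)"
proof
  assume r: "reduced (x # y # ys)"
  have "y \<noteq> flipl x" using r[unfolded reduced_def, rule_format, of 0] by (auto simp: cancel_iff)
  moreover have "reduced (y # ys)" unfolding reduced_def
  proof (intro allI impI)
    fix i assume "Suc i < length (y # ys)"
    then show "\<not> (fst ((y # ys) ! i) = fst ((y # ys) ! Suc i) \<and> snd ((y # ys) ! i) \<noteq> snd ((y # ys) ! Suc i))"
      using r[unfolded reduced_def, rule_format, of "Suc i"] by simp
  qed
  ultimately show "y \<noteq> flipl x \<and> reduced (y # ys)" by simp
next
  assume h: "y \<noteq> flipl x \<and> reduced (y # ys)"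
  show "reduced (x # y # ys)" unfolding reduced_def
  proof (intro allI impI)
    fix i assume i: "Suc i < length (x # y # ys)"
    show "\<not> (fst ((x # y # ys) ! i) = fst ((x # y # ys) ! Suc i) \<and> snd ((x # y # ys) ! i) \<noteq> snd ((x # y # ys) ! Suc i))"
    proof (cases i)
      case 0 then show ?thesis using h cancel_iff[of x y] by auto
    next
      case (Suc j) then show ?thesis using h i unfolding reduced_def by auto
    qed
  qed
qed

lemma reduced_tl: "reduced (x # ys) \<Longrightarrow> reduced ys"
  by (cases ys) (auto simp: reduced_Cons2)

lemma red_cons_simp: "red_cons x (y # ys) = (if y = flipl x then ys else x # y # ys)"
  using cancel_iff[of x y] by (auto simp: red_cons.simps(2))

lemma reduced_red_cons: "reduced z \<Longrightarrow> reduced (red_cons x z)"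
  by (cases z) (auto simp: red_cons_simp reduced_Cons2 intro: reduced_tl)

definition act :: "('g \<times> bool) list \<Rightarrow> ('g \<times> bool) list \<Rightarrow> ('g \<times> bool) list" where
  "act w z = foldr red_cons w z"

lemma act_Nil[simp]: "act [] z = z" by (simp add: act_def)
lemma act_Cons[simp]: "act (c # w) z = red_cons c (act w z)" by (simp add: act_def)
lemma act_append: "act (x @ y) z = act x (act y z)" by (simp add: act_def)
lemma normalize_act: "normalize w = act w []" by (simp add: normalize_def act_def)

lemma reduced_act: "reduced z \<Longrightarrow> reduced (act w z)"
  by (induction w) (auto intro: reduced_red_cons)

lemma reduced_normalize: "reduced (normalize w)"
  by (simp add: normalize_act reduced_act)

lemma normalize_reduced: "reduced w \<Longrightarrow> normalize w = w"
proof (induction w)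
  case Nil then show ?case by (simp add: normalize_act)
next
  case (Cons c w)
  have "reduced w" using Cons.prems reduced_tl by blast
  then have "normalize w = w" using Cons.IH by simp
  then show ?case using Cons.prems
    by (cases w) (auto simp: normalize_act red_cons_simp reduced_Cons2)
qed

lemma red_cons_inv: "reduced z \<Longrightarrow> red_cons (flipl d) (red_cons d z) = z"
proof (cases z)
  case Nil then show ?thesis by (simp add: red_cons_simp)
next
  case (Cons y ys)
  assume r: "reduced z"
  show ?thesis
  proof (cases "y = flipl d")
    case True
    then show ?thesis using r Cons
      by (cases ys) (auto simp: red_cons_simp reduced_Cons2)
  next
    case False then show ?thesis using Cons by (simp add: red_cons_simp)
  qed
qed

lemma act_red_cons: "reduced z \<Longrightarrow> red_cons c (act v z) = act (red_cons c v) z"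
proof (cases v)
  case Nil then show ?thesis by simp
next
  case (Cons d vs)
  assume r: "reduced z"
  show ?thesis
  proof (cases "d = flipl c")
    case True
    then have "c = flipl d" by simp
    then show ?thesis using Cons red_cons_inv[OF reduced_act[OF r, of vs], of d]
      by (simp add: red_cons_simp True)
  next
    case False then show ?thesis using Cons by (simp add: red_cons_simp)
  qed
qed

lemma act_normalize: "reduced z \<Longrightarrow> act (normalize w) z = act w z"
  by (induction w) (simp_all add: normalize_act act_red_cons[symmetric])

lemma normalize_append: "normalize (x @ y) = act x (normalize y)"
  by (simp add: normalize_act act_append)

definition invw :: "('g \<times> bool) list \<Rightarrow> ('g \<times> bool) list" where
  "invw w = rev (map flipl w)"

lemma act_invw: "reduced w \<Longrightarrow> act (invw w) w = []"
proof (induction w)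
  case Nil then show ?case by (simp add: invw_def)
next
  case (Cons c w)
  have "reduced w" using Cons.prems reduced_tl by blast
  have "act (invw (c # w)) (c # w) = act (invw w) (red_cons (flipl c) (c # w))"
    by (simp add: invw_def act_append)
  also have "\<dots> = act (invw w) w" by (simp add: red_cons_simp)
  finally show ?case using Cons.IH \<open>reduced w\<close> by simp
qed

lemma carrier_F: "carrier (free_group UNIV) = {w. reduced w}"
  by (simp add: free_group_def)
lemma mult_F: "x \<otimes>\<^bsub>free_group UNIV\<^esub> y = normalize (x @ y)"
  by (simp add: free_group_def)
lemma one_F: "\<one>\<^bsub>free_group UNIV\<^esub> = []"
  by (simp add: free_group_def)

lemma group_F: "group (free_group (UNIV :: 'g set))"
proof (rule groupI)
  fix x y :: "('g \<times> bool) list"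
  show "x \<otimes>\<^bsub>free_group UNIV\<^esub> y \<in> carrier (free_group UNIV)"
    by (simp add: carrier_F mult_F reduced_normalize)
next
  show "\<one>\<^bsub>free_group (UNIV :: 'g set)\<^esub> \<in> carrier (free_group UNIV)"
    by (simp add: carrier_F one_F)
next
  fix x y z :: "('g \<times> bool) list"
  assume "x \<in> carrier (free_group UNIV)" "y \<in> carrier (free_group UNIV)" "z \<in> carrier (free_group UNIV)"
  show "x \<otimes>\<^bsub>free_group UNIV\<^esub> y \<otimes>\<^bsub>free_group UNIV\<^esub> z = x \<otimes>\<^bsub>free_group UNIV\<^esub> (y \<otimes>\<^bsub>free_group UNIV\<^esub> z)"
  proof -
    have "normalize (normalize (x @ y) @ z) = act (normalize (x @ y)) (normalize z)"
      by (simp add: normalize_append)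
    also have "\<dots> = act (x @ y) (normalize z)" by (simp add: act_normalize reduced_normalize)
    also have "\<dots> = act x (normalize (y @ z))" by (simp add: act_append normalize_append)
    also have "\<dots> = normalize (x @ normalize (y @ z))"
      by (simp add: normalize_append normalize_reduced reduced_act reduced_normalize)
    finally show ?thesis by (simp add: mult_F)
  qed
next
  fix x :: "('g \<times> bool) list"
  assume "x \<in> carrier (free_group UNIV)"
  then show "\<one>\<^bsub>free_group UNIV\<^esub> \<otimes>\<^bsub>free_group UNIV\<^esub> x = x"
    by (simp add: carrier_F mult_F one_F normalize_reduced)
next
  fix x :: "('g \<times> bool) list"
  assume x: "x \<in> carrier (free_group UNIV)"
  show "\<exists>y\<in>carrier (free_group UNIV). y \<otimes>\<^bsub>free_group UNIV\<^esub> x = \<one>\<^bsub>free_group UNIV\<^esub>"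
  proof (intro bexI)
    show "normalize (invw x) \<in> carrier (free_group UNIV)" by (simp add: carrier_F reduced_normalize)
    have "reduced x" using x by (simp add: carrier_F)
    then show "normalize (invw x) \<otimes>\<^bsub>free_group UNIV\<^esub> x = \<one>\<^bsub>free_group UNIV\<^esub>"
      by (simp add: mult_F one_F normalize_append act_normalize normalize_reduced act_invw)
  qed
qed

definition valg :: "('h, 'm) monoid_scheme \<Rightarrow> ('g \<Rightarrow> 'h) \<Rightarrow> ('g \<times> bool) \<Rightarrow> 'h" where
  "valg H h c = (if snd c then inv\<^bsub>H\<^esub> (h (fst c)) else h (fst c))"

definition ev :: "('h, 'm) monoid_scheme \<Rightarrow> ('g \<Rightarrow> 'h) \<Rightarrow> ('g \<times> bool) list \<Rightarrow> 'h" where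
  "ev H h w = foldr (\<lambda>c acc. valg H h c \<otimes>\<^bsub>H\<^esub> acc) w \<one>\<^bsub>H\<^esub>"

context
  fixes H :: "('h, 'm) monoid_scheme" and h :: "'g \<Rightarrow> 'h"
  assumes grpH: "group H" and hH: "\<And>g. h g \<in> carrier H"
begin

interpretation H: group H by (rule grpH)

lemma valg_closed: "valg H h c \<in> carrier H"
  by (simp add: valg_def hH)

lemma valg_flip: "t \<in> carrier H \<Longrightarrow> valg H h c \<otimes>\<^bsub>H\<^esub> (valg H h (flipl c) \<otimes>\<^bsub>H\<^esub> t) = t"
  using hH[of "fst c"]
  by (cases "snd c") (simp_all add: valg_def H.m_assoc[symmetric])

lemma ev_Nil[simp]: "ev H h [] = \<one>\<^bsub>H\<^esub>" by (simp add: ev_def)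
lemma ev_Cons[simp]: "ev H h (c # w) = valg H h c \<otimes>\<^bsub>H\<^esub> ev H h w" by (simp add: ev_def)

lemma ev_closed: "ev H h w \<in> carrier H"
  by (induction w) (simp_all add: valg_closed)

lemma ev_red_cons: "ev H h (red_cons c z) = valg H h c \<otimes>\<^bsub>H\<^esub> ev H h z"
proof (cases z)
  case Nil then show ?thesis by simp
next
  case (Cons y ys)
  show ?thesis
  proof (cases "y = flipl c")
    case True
    then show ?thesis using Cons valg_flip[OF ev_closed, of c ys] by (simp add: red_cons_simp)
  next
    case False then show ?thesis using Cons by (simp add: red_cons_simp)
  qed
qed

lemma ev_act: "ev H h (act w z) = ev H h w \<otimes>\<^bsub>H\<^esub> ev H h z"
  by (induction w) (simp_all add: ev_red_cons ev_closed valg_closed H.m_assoc)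

lemma ev_normalize: "ev H h (normalize w) = ev H h w"
  by (simp add: normalize_act ev_act ev_closed)

lemma ev_hom: "ev H h \<in> hom (free_group UNIV) H"
proof (rule homI)
  fix x y :: "('g \<times> bool) list"
  have "ev H h (normalize (x @ y)) = ev H h (act x (normalize y))" by (simp only: normalize_append)
  also have "\<dots> = ev H h x \<otimes>\<^bsub>H\<^esub> ev H h y" by (simp only: ev_act ev_normalize)
  finally show "ev H h (x \<otimes>\<^bsub>free_group UNIV\<^esub> y) = ev H h x \<otimes>\<^bsub>H\<^esub> ev H h y"
    by (simp add: mult_F)
qed (simp add: ev_closed)

lemma ev_gen: "ev H h [(g, False)] = h g"
  by (simp add: valg_def hH)

end

lemma (in group) generate_normalI:
  assumes T: "T \<subseteq> carrier G"
    and conj: "\<And>g t. g \<in> carrier G \<Longrightarrow> t \<in> T \<Longrightarrow> g \<otimes> t \<otimes> inv g \<in> generate G T"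
  shows "generate G T \<lhd> G"
proof -
  have sg: "subgroup (generate G T) G" by (rule generate_is_subgroup[OF T])
  have "g \<otimes> x \<otimes> inv g \<in> generate G T" if g: "g \<in> carrier G" and x: "x \<in> generate G T" for g x
    using x
  proof (induction rule: generate.induct)
    case one then show ?case using g by (simp add: generate.one)
  next
    case (incl t) then show ?case using conj g by blast
  next
    case (inv t)
    have t: "t \<in> carrier G" using inv T by blast
    have "g \<otimes> inv t \<otimes> inv g = inv (g \<otimes> t \<otimes> inv g)"
      using g t by (simp add: inv_mult_group m_assoc)
    then show ?case using conj[OF g inv] subgroup.m_inv_closed[OF sg] by simp
  next
    case (eng h1 h2)
    have h1: "h1 \<in> carrier G" and h2: "h2 \<in> carrier G"
      using eng.hyps subgroup.subset[OF sg] by blast+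
    have "g \<otimes> (h1 \<otimes> h2) \<otimes> inv g = (g \<otimes> h1 \<otimes> inv g) \<otimes> (g \<otimes> h2 \<otimes> inv g)"
    proof -
      have c: "inv g \<otimes> (g \<otimes> x) = x" if "x \<in> carrier G" for x
        using g that by (simp add: m_assoc[symmetric])
      show ?thesis using g h1 h2 by (simp add: m_assoc c)
    qed
    then show ?case using eng.IH generate.eng by metis
  qed
  then show ?thesis using sg normal_inv_iff by blast
qed

lemma (in group) normal_closure_normal:
  assumes "R \<subseteq> carrier G"
  shows "normal_closure G R \<lhd> G"
  unfolding normal_closure_def
proof (rule generate_normalI)
  show "{g \<otimes> r \<otimes> inv g |g r. g \<in> carrier G \<and> r \<in> R} \<subseteq> carrier G"
    using assms by auto
next
  fix g t assume g: "g \<in> carrier G" and "t \<in> {g \<otimes> r \<otimes> inv g |g r. g \<in> carrier G \<and> r \<in> R}"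
  then obtain g' r where t: "t = g' \<otimes> r \<otimes> inv g'" and g': "g' \<in> carrier G" and r: "r \<in> R" by blast
  have rc: "r \<in> carrier G" using r assms by blast
  have "g \<otimes> t \<otimes> inv g = (g \<otimes> g') \<otimes> r \<otimes> inv (g \<otimes> g')"
    using g g' rc by (simp add: t m_assoc inv_mult_group)
  then show "g \<otimes> t \<otimes> inv g \<in> generate G {g \<otimes> r \<otimes> inv g |g r. g \<in> carrier G \<and> r \<in> R}"
    using g g' r by (auto intro!: generate.incl)
qed

lemma (in group) normal_closure_incl:
  assumes "R \<subseteq> carrier G" shows "R \<subseteq> normal_closure G R"
proof
  fix r assume r: "r \<in> R"
  have "r \<in> {g \<otimes> r \<otimes> inv g |g r. g \<in> carrier G \<and> r \<in> R}"
  proof -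
    have rc: "r \<in> carrier G" using r assms by blast
    have "r = \<one> \<otimes> r \<otimes> inv \<one>" using rc by simp
    then show ?thesis using r by blast
  qed
  then show "r \<in> normal_closure G R" unfolding normal_closure_def
    by (rule generate.incl)
qed

lemma (in group) normal_closure_min:
  assumes N: "N \<lhd> G" and R: "R \<subseteq> N"
  shows "normal_closure G R \<subseteq> N"
  unfolding normal_closure_def
proof (rule generate_subgroup_incl)
  show "subgroup N G" using N normal_imp_subgroup by blast
  show "{g \<otimes> r \<otimes> inv g |g r. g \<in> carrier G \<and> r \<in> R} \<subseteq> N"
    using N R normal_inv_iff by blast
qed

definition aff :: "int \<Rightarrow> int \<Rightarrow> int \<Rightarrow> int \<Rightarrow> int" where
  "aff n a c = (\<lambda>x\<in>{0..<n}. (a * x + c) mod n)"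

context fixes n :: int assumes n1: "n > 1"
begin

lemma aff_in: "x \<in> {0..<n} \<Longrightarrow> aff n a c x \<in> {0..<n}"
  using n1 by (simp add: aff_def)

lemma aff_comp: "compose {0..<n} (aff n a c) (aff n a' c') = aff n (a * a') (a * c' + c)"
proof (rule ext)
  fix x
  show "compose {0..<n} (aff n a c) (aff n a' c') x = aff n (a * a') (a * c' + c) x"
  proof (cases "x \<in> {0..<n}")
    case True
    have 1: "aff n a' c' x = (a' * x + c') mod n" using True by (simp add: aff_def)
    have 2: "(a' * x + c') mod n \<in> {0..<n}" using n1 by simp
    have "aff n a c (aff n a' c' x) = (a * ((a' * x + c') mod n) + c) mod n"
      using 2 by (simp only: 1) (simp add: aff_def)
    also have "\<dots> = (a * a' * x + (a * c' + c)) mod n"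
      by (metis (no_types, lifting) add.assoc distrib_left mod_add_left_eq mod_mult_right_eq mult.assoc)
    finally have e: "aff n a c (aff n a' c' x) = (a * a' * x + (a * c' + c)) mod n" .
    have l: "compose {0..<n} (aff n a c) (aff n a' c') x = aff n a c (aff n a' c' x)"
      using True by (simp add: compose_def)
    have r: "aff n (a * a') (a * c' + c) x = (a * a' * x + (a * c' + c)) mod n"
      using True by (simp add: aff_def)
    show ?thesis using l r e by simp
  next
    case False then show ?thesis by (auto simp add: compose_def aff_def)
  qed
qed

lemma aff_cong: "a mod n = a2 mod n \<Longrightarrow> c mod n = c2 mod n \<Longrightarrow> aff n a c = aff n a2 c2"
  unfolding aff_def
  by (rule restrict_ext) (metis mod_add_cong mod_mult_cong)

lemma aff_id: "aff n 1 0 = (\<lambda>x\<in>{0..<n}. x)"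
  unfolding aff_def by (rule restrict_ext) simp

lemma aff_Bij: assumes "(a * a') mod n = 1" shows "aff n a c \<in> Bij {0..<n}"
proof -
  have m1: "(a' * a) mod n = 1 mod n" "(a * a') mod n = 1 mod n"
    using assms n1 by (simp_all add: mult.commute)
  have inv1: "compose {0..<n} (aff n a' (- (a' * c))) (aff n a c) = (\<lambda>x\<in>{0..<n}. x)"
  proof -
    have "compose {0..<n} (aff n a' (- (a' * c))) (aff n a c) = aff n (a' * a) (a' * c + - (a' * c))"
      by (rule aff_comp)
    also have "\<dots> = aff n 1 0" by (rule aff_cong) (use m1 in simp_all)
    finally show ?thesis by (simp add: aff_id)
  qed
  have inv2: "compose {0..<n} (aff n a c) (aff n a' (- (a' * c))) = (\<lambda>x\<in>{0..<n}. x)"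
  proof -
    have "compose {0..<n} (aff n a c) (aff n a' (- (a' * c))) = aff n (a * a') (a * - (a' * c) + c)"
      by (rule aff_comp)
    also have "\<dots> = aff n 1 0"
    proof (rule aff_cong)
      show "(a * - (a' * c) + c) mod n = 0 mod n"
      proof -
        have "(a * - (a' * c) + c) = c * (1 - a * a')" by (simp add: algebra_simps)
        moreover have "(1 - a * a') mod n = 0" using m1 by (simp add: mod_eq_dvd_iff mod_eq_0_iff_dvd dvd_diff_commute)
        ultimately show ?thesis by (simp add: mod_mult_right_eq[symmetric, of c])
      qed
    qed (use m1 in simp)
    finally show ?thesis by (simp add: aff_id)
  qed
  have "bij_betw (aff n a c) {0..<n} {0..<n}"
  proof (rule bij_betw_byWitness[where f' = "aff n a' (- (a' * c))"])
    show "\<forall>x\<in>{0..<n}. aff n a' (- (a' * c)) (aff n a c x) = x"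
    proof
      fix x :: int assume x: "x \<in> {0..<n}"
      show "aff n a' (- (a' * c)) (aff n a c x) = x"
        using fun_cong[OF inv1, of x] x by (simp add: compose_def)
    qed
    show "\<forall>x\<in>{0..<n}. aff n a c (aff n a' (- (a' * c)) x) = x"
    proof
      fix x :: int assume x: "x \<in> {0..<n}"
      show "aff n a c (aff n a' (- (a' * c)) x) = x"
        using fun_cong[OF inv2, of x] x by (simp add: compose_def)
    qed
  qed (use aff_in in auto)
  then show ?thesis by (simp add: Bij_def aff_def)
qed

abbreviation "HH \<equiv> BijGroup {0..<n}"

lemma HH_mult: "x \<in> Bij {0..<n} \<Longrightarrow> y \<in> Bij {0..<n} \<Longrightarrow> x \<otimes>\<^bsub>HH\<^esub> y = compose {0..<n} x y"
  by (simp add: BijGroup_def)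

lemma HH_one: "\<one>\<^bsub>HH\<^esub> = aff n 1 0"
  by (simp add: BijGroup_def aff_id)

lemma HH_carrier: "carrier HH = Bij {0..<n}"
  by (simp add: BijGroup_def)

end

definition unitm :: "int \<Rightarrow> int \<Rightarrow> bool" where "unitm n a \<longleftrightarrow> (\<exists>a'. (a * a') mod n = 1)"

context fixes n :: int assumes n1: "n > 1"
begin

interpretation HH: group "BijGroup {0..<n}" by (rule group_BijGroup)

lemma aff_car: "unitm n a \<Longrightarrow> aff n a c \<in> carrier (BijGroup {0..<n})"
  using aff_Bij[OF n1] HH_carrier[OF n1] unfolding unitm_def by blast

lemma unitm_mult: "unitm n a \<Longrightarrow> unitm n b \<Longrightarrow> unitm n (a * b)"
proof -
  assume "unitm n a" "unitm n b"
  then obtain a' b' where a: "(a * a') mod n = 1" and b: "(b * b') mod n = 1" unfolding unitm_def by blast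
  have "(a * b * (a' * b')) mod n = ((a * a') * (b * b')) mod n" by (simp add: algebra_simps)
  also have "\<dots> = ((a * a') mod n * ((b * b') mod n)) mod n" by (simp add: mod_mult_eq)
  also have "\<dots> = 1" using a b n1 by simp
  finally show ?thesis unfolding unitm_def by blast
qed

lemma unitm_1: "unitm n 1" unfolding unitm_def using n1 by (intro exI[of _ 1]) simp

lemma aff_mult: "unitm n a \<Longrightarrow> unitm n a' \<Longrightarrow>
   aff n a c \<otimes>\<^bsub>BijGroup {0..<n}\<^esub> aff n a' c' = aff n (a * a') (a * c' + c)"
  using aff_car HH_mult[OF n1] HH_carrier[OF n1] aff_comp[OF n1] by auto

lemma A_pow: "aff n 1 1 [^]\<^bsub>BijGroup {0..<n}\<^esub> (m :: nat) = aff n 1 (int m)"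
proof (induction m)
  case 0 then show ?case using HH_one[OF n1] by simp
next
  case (Suc m)
  then show ?case by (simp add: aff_mult unitm_1 add.commute)
qed

lemma B_pow: "unitm n k \<Longrightarrow> aff n k 0 [^]\<^bsub>BijGroup {0..<n}\<^esub> (m :: nat) = aff n (k ^ m) 0"
proof (induction m)
  case 0 then show ?case using HH_one[OF n1] by simp
next
  case (Suc m)
  have u: "unitm n (k ^ m)" by (induction m) (simp_all add: unitm_1 unitm_mult Suc.prems)
  from Suc show ?case by (simp add: aff_mult u mult.commute)
qed

lemma main_rel:
  fixes p :: nat and k :: int
  assumes p1: "p \<ge> 1" and kp: "k ^ p mod n = 1"
    and kp1: "(k ^ (p - 1) * int p) mod n = (int p - 1) mod n"
  shows "aff n 1 1 \<otimes>\<^bsub>BijGroup {0..<n}\<^esub> comm (BijGroup {0..<n}) (aff n 1 1 [^]\<^bsub>BijGroup {0..<n}\<^esub> p) (aff n k 0)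
          = \<one>\<^bsub>BijGroup {0..<n}\<^esub>"
    and "aff n k 0 [^]\<^bsub>BijGroup {0..<n}\<^esub> p = \<one>\<^bsub>BijGroup {0..<n}\<^esub>"
proof -
  let ?K = "k ^ (p - 1)"
  have kK: "k ^ p = ?K * k" using p1 by (metis Suc_diff_1 less_le_trans less_numeral_extra(1) power_Suc2)
  have uk: "unitm n k" unfolding unitm_def using kp kK by (metis mult.commute)
  have uK: "unitm n ?K" unfolding unitm_def using kp kK by metis
  have invA: "inv\<^bsub>BijGroup {0..<n}\<^esub> (aff n 1 (int p)) = aff n 1 (- int p)"
  proof (rule HH.inv_equality)
    show "aff n 1 (- int p) \<otimes>\<^bsub>BijGroup {0..<n}\<^esub> aff n 1 (int p) = \<one>\<^bsub>BijGroup {0..<n}\<^esub>"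
      by (simp add: aff_mult unitm_1 HH_one[OF n1])
  qed (simp_all add: aff_car unitm_1)
  have invB: "inv\<^bsub>BijGroup {0..<n}\<^esub> (aff n k 0) = aff n ?K 0"
  proof (rule HH.inv_equality)
    have "aff n ?K 0 \<otimes>\<^bsub>BijGroup {0..<n}\<^esub> aff n k 0 = aff n (?K * k) 0"
      using aff_mult[OF uK uk, of 0 0] by simp
    also have "\<dots> = aff n 1 0" by (rule aff_cong[OF n1]) (use kp kK n1 in simp_all)
    finally show "aff n ?K 0 \<otimes>\<^bsub>BijGroup {0..<n}\<^esub> aff n k 0 = \<one>\<^bsub>BijGroup {0..<n}\<^esub>"
      by (simp add: HH_one[OF n1])
  qed (use aff_car[OF uk] aff_car[OF uK] in auto)
  have "aff n 1 1 \<otimes>\<^bsub>BijGroup {0..<n}\<^esub> comm (BijGroup {0..<n}) (aff n 1 1 [^]\<^bsub>BijGroup {0..<n}\<^esub> p) (aff n k 0)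
     = aff n (?K * k) (?K * int p - int p + 1)"
  proof -
    have m1: "aff n 1 (- int p) \<otimes>\<^bsub>BijGroup {0..<n}\<^esub> aff n ?K 0 = aff n ?K (- int p)"
      using aff_mult[OF unitm_1 uK, of "- int p" 0] by simp
    have m2: "aff n ?K (- int p) \<otimes>\<^bsub>BijGroup {0..<n}\<^esub> aff n 1 (int p) = aff n ?K (?K * int p - int p)"
      using aff_mult[OF uK unitm_1, of "- int p" "int p"] by simp
    have m3: "aff n ?K (?K * int p - int p) \<otimes>\<^bsub>BijGroup {0..<n}\<^esub> aff n k 0 = aff n (?K * k) (?K * int p - int p)"
      using aff_mult[OF uK uk, of "?K * int p - int p" 0] by simp
    have m4: "aff n 1 1 \<otimes>\<^bsub>BijGroup {0..<n}\<^esub> aff n (?K * k) (?K * int p - int p) = aff n (?K * k) (?K * int p - int p + 1)"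
      using aff_mult[OF unitm_1 unitm_mult[OF uK uk], of 1 "?K * int p - int p"] by (simp add: add.commute)
    show ?thesis by (simp only: comm_def A_pow invA invB m1 m2 m3 m4)
  qed
  also have "\<dots> = aff n 1 0"
  proof (rule aff_cong[OF n1])
    show "(?K * k) mod n = 1 mod n" using kp kK n1 by simp
    have "(?K * int p - int p + 1) mod n = ((?K * int p) mod n + (- int p + 1)) mod n"
    proof -
      have e: "?K * int p - int p + 1 = ?K * int p + (- int p + 1)" by simp
      show ?thesis by (simp only: e mod_add_left_eq)
    qed
    also have "\<dots> = ((int p - 1) mod n + (- int p + 1)) mod n" using kp1 by simp
    also have "\<dots> = 0" by (simp add: mod_add_left_eq)
    finally show "(?K * int p - int p + 1) mod n = 0 mod n" by simp
  qed
  finally show "aff n 1 1 \<otimes>\<^bsub>BijGroup {0..<n}\<^esub> comm (BijGroup {0..<n}) (aff n 1 1 [^]\<^bsub>BijGroup {0..<n}\<^esub> p) (aff n k 0)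
          = \<one>\<^bsub>BijGroup {0..<n}\<^esub>" by (simp add: HH_one[OF n1])
  have "aff n k 0 [^]\<^bsub>BijGroup {0..<n}\<^esub> p = aff n (k ^ p) 0" by (rule B_pow[OF uk])
  also have "\<dots> = aff n 1 0" by (rule aff_cong[OF n1]) (use kp n1 in simp_all)
  finally show "aff n k 0 [^]\<^bsub>BijGroup {0..<n}\<^esub> p = \<one>\<^bsub>BijGroup {0..<n}\<^esub>" by (simp add: HH_one[OF n1])
qed

lemma A_pow_ne:
  assumes "int p mod n \<noteq> 0"
  shows "aff n 1 1 [^]\<^bsub>BijGroup {0..<n}\<^esub> p \<noteq> \<one>\<^bsub>BijGroup {0..<n}\<^esub>"
proof
  assume "aff n 1 1 [^]\<^bsub>BijGroup {0..<n}\<^esub> p = \<one>\<^bsub>BijGroup {0..<n}\<^esub>"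
  then have "aff n 1 (int p) = aff n 1 0" by (simp add: A_pow HH_one[OF n1])
  then have "aff n 1 (int p) 0 = aff n 1 0 0" by simp
  then show False using assms n1 by (simp add: aff_def)
qed

end

lemma pow_diff_ge: fixes a b :: int assumes "0 \<le> b" "b \<le> a"
  shows "a ^ Suc m - b ^ Suc m \<ge> (a - b) * b ^ m"
proof -
  have "b ^ m \<le> a ^ m" using assms power_mono by blast
  then have "a * b ^ m \<le> a * a ^ m" using assms by (simp add: mult_left_mono)
  then show ?thesis by (simp add: algebra_simps)
qed

lemma number_theory:
  fixes p :: nat
  assumes pr: "Factorial_Ring.prime p" and od: "odd p"
  shows "\<exists>n k :: int. n > 1 \<and> k ^ p mod n = 1 \<and> (k ^ (p - 1) * int p) mod n = (int p - 1) mod n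
            \<and> int p mod n \<noteq> 0"
proof -
  define P where "P = int p"
  have p2: "p \<ge> 2" using pr by (simp add: prime_ge_2_nat)
  have p3: "p \<ge> 3" using p2 od by (cases "p = 2") auto
  define n where "n = P ^ p - (P - 1) ^ p"
  have P3: "P \<ge> 3" using p3 by (simp add: P_def)
  obtain m where pm: "p = Suc m" and m2: "m \<ge> 2" using p3 by (cases p) auto
  have "P - 1 \<le> (P - 1) ^ m" using m2 P3 by (intro self_le_power) auto
  also have "(P - 1) ^ m = (P - (P - 1)) * (P - 1) ^ m" by simp
  also have "\<dots> \<le> n" unfolding n_def pm by (rule pow_diff_ge) (use P3 in auto)
  finally have n1: "n > 1" using P3 by simp
  have cop1: "coprime (P - 1) n"
  proof (rule coprimeI)
    fix d assume d1: "d dvd P - 1" and d2: "d dvd n"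
    have "P - 1 dvd (P - 1) ^ p" using p2 by (intro dvd_power) auto
    then have "d dvd (P - 1) ^ p" using d1 by (rule dvd_trans[rotated])
    moreover have e: "P ^ p = n + (P - 1) ^ p" by (simp add: n_def)
    ultimately have "d dvd P ^ p" using d2 by (simp only: e dvd_add)
    moreover have "coprime (P - 1) (P ^ p)" by simp
    ultimately show "is_unit d" using d1 coprime_common_divisor by blast
  qed
  have cop2: "coprime P n"
  proof (rule coprimeI)
    fix d assume d1: "d dvd P" and d2: "d dvd n"
    have "P dvd P ^ p" using p2 by (intro dvd_power) auto
    then have "d dvd P ^ p" using d1 by (rule dvd_trans[rotated])
    moreover have e: "(P - 1) ^ p = P ^ p - n" by (simp add: n_def)
    ultimately have "d dvd (P - 1) ^ p" using d2 by (simp only: e dvd_diff)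
    moreover have "coprime P ((P - 1) ^ p)" by (simp add: coprime_commute)
    ultimately show "is_unit d" using d1 coprime_common_divisor by blast
  qed
  obtain q where q: "[(P - 1) * q = 1] (mod n)" using cong_solve_coprime_int[OF cop1] by blast
  define k where "k = P * q"
  have Pp: "[P ^ p = (P - 1) ^ p] (mod n)" unfolding n_def by (simp add: cong_iff_dvd_diff)
  have "[k ^ p = P ^ p * q ^ p] (mod n)" by (simp add: k_def power_mult_distrib)
  also have "[P ^ p * q ^ p = (P - 1) ^ p * q ^ p] (mod n)" by (rule cong_mult[OF Pp cong_refl])
  also have "(P - 1) ^ p * q ^ p = ((P - 1) * q) ^ p" by (simp add: power_mult_distrib)
  also have "[((P - 1) * q) ^ p = 1 ^ p] (mod n)" by (rule cong_pow[OF q])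
  finally have kp: "[k ^ p = 1] (mod n)" by simp
  have kP: "[k * (P - 1) = P] (mod n)"
  proof -
    have "k * (P - 1) = P * ((P - 1) * q)" by (simp add: k_def algebra_simps)
    also have "[P * ((P - 1) * q) = P * 1] (mod n)" by (rule cong_mult[OF cong_refl q])
    finally show ?thesis by simp
  qed
  have pS: "p = Suc (p - 1)" using p2 by simp
  have kK: "k ^ p = k ^ (p - 1) * k" by (subst pS) (simp only: power_Suc2 diff_Suc_1)
  have "[k ^ (p - 1) * P = k ^ (p - 1) * (k * (P - 1))] (mod n)"
    by (rule cong_mult[OF cong_refl cong_sym[OF kP]])
  also have "k ^ (p - 1) * (k * (P - 1)) = k ^ p * (P - 1)" by (simp add: kK)
  also have "[k ^ p * (P - 1) = 1 * (P - 1)] (mod n)" by (rule cong_mult[OF kp cong_refl])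
  finally have kp1: "[k ^ (p - 1) * P = P - 1] (mod n)" by simp
  have pn: "P mod n \<noteq> 0"
  proof
    assume "P mod n = 0"
    then have "n dvd P" by (simp add: mod_eq_0_iff_dvd)
    then have "is_unit n" using coprime_common_divisor[OF cop2 _ dvd_refl] by blast
    then show False using n1 by simp
  qed
  show ?thesis
    using n1 kp kp1 pn unfolding cong_def P_def by (intro exI[of _ n] exI[of _ k]) (simp add: cong_def)
qed

lemma mk_gh: "group G \<Longrightarrow> group H \<Longrightarrow> h \<in> hom G H \<Longrightarrow> group_hom G H h"
  by (simp add: group_hom_def group_hom_axioms_def)

lemma (in group_hom) hom_comm:
  "x \<in> carrier G \<Longrightarrow> y \<in> carrier G \<Longrightarrow> h (comm G x y) = comm H (h x) (h y)"
  by (simp add: comm_def)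

lemma (in group) comm_closed: "x \<in> carrier G \<Longrightarrow> y \<in> carrier G \<Longrightarrow> comm G x y \<in> carrier G"
  by (simp add: comm_def)

lemma (in group) cancel1: "x \<in> carrier G \<Longrightarrow> z \<in> carrier G \<Longrightarrow> x \<otimes> (inv x \<otimes> z) = z"
  by (simp add: m_assoc[symmetric])
lemma (in group) cancel2: "x \<in> carrier G \<Longrightarrow> z \<in> carrier G \<Longrightarrow> inv x \<otimes> (x \<otimes> z) = z"
  by (simp add: m_assoc[symmetric])

lemma (in group) comm_inv: "x \<in> carrier G \<Longrightarrow> y \<in> carrier G \<Longrightarrow> inv (comm G x y) = comm G y x"
  by (simp add: comm_def inv_mult_group m_assoc)

lemma (in group) comm_conj:
  assumes g: "g \<in> carrier G" and x: "x \<in> carrier G" and y: "y \<in> carrier G"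
  shows "g \<otimes> comm G x y \<otimes> inv g = comm G (x \<otimes> inv g) y \<otimes> inv (comm G (inv g) y)"
  using g x y by (simp add: comm_def inv_mult_group m_assoc cancel1 cancel2)

lemma (in group) comm_one_left: "y \<in> carrier G \<Longrightarrow> comm G \<one> y = \<one>"
  by (simp add: comm_def)

lemma (in group) lower_central_normal: "lower_central G k \<lhd> G"
proof (induction k)
  case 0 then show ?case by (simp add: normal_self)
next
  case (Suc k)
  have L: "lower_central G k \<subseteq> carrier G" using Suc normal_imp_subgroup subgroup.subset by blast
  let ?T = "{comm G x y | x y. x \<in> carrier G \<and> y \<in> lower_central G k}"
  have T: "?T \<subseteq> carrier G" using L comm_closed by blast
  show ?case unfolding lower_central.simps
  proof (rule generate_normalI[OF T])
    fix g t assume g: "g \<in> carrier G" and "t \<in> ?T"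
    then obtain x y where t: "t = comm G x y" and x: "x \<in> carrier G" and y: "y \<in> lower_central G k" by blast
    have yc: "y \<in> carrier G" using y L by blast
    have e: "g \<otimes> t \<otimes> inv g = comm G (x \<otimes> inv g) y \<otimes> inv (comm G (inv g) y)"
      using comm_conj[OF g x yc] t by simp
    have 1: "comm G (x \<otimes> inv g) y \<in> generate G ?T" using x g y by (intro generate.incl) blast
    have 2: "inv (comm G (inv g) y) \<in> generate G ?T" using g y by (intro generate.inv) blast
    show "g \<otimes> t \<otimes> inv g \<in> generate G ?T" unfolding e by (rule generate.eng[OF 1 2])
  qed
qed

lemma (in group) pow_in_lower_central:
  assumes A: "A \<in> carrier G" and B: "B \<in> carrier G"
    and rel: "(A \<otimes> comm G (A [^] (p::nat)) B) [^] p = \<one>"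
  shows "A [^] p \<in> lower_central G k"
proof (induction k)
  case 0 then show ?case using A by simp
next
  case (Suc k)
  let ?N = "lower_central G (Suc k)"
  have N: "?N \<lhd> G" by (rule lower_central_normal)
  interpret N: normal ?N G by (rule N)
  have Ap: "A [^] p \<in> carrier G" using A by simp
  have "comm G B (A [^] p) \<in> ?N" unfolding lower_central.simps
    using B Suc by (intro generate.incl) blast
  then have "inv (comm G B (A [^] p)) \<in> ?N" by (rule N.m_inv_closed)
  then have u: "comm G (A [^] p) B \<in> ?N" using comm_inv[OF B Ap] by simp
  have uc: "comm G (A [^] p) B \<in> carrier G" using Ap B comm_closed by blast
  interpret pi: group_hom G "G Mod ?N" "\<lambda>a. ?N #> a"
    by (rule mk_gh[OF is_group N.factorgroup_is_group N.r_coset_hom_Mod])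
  have piu: "?N #> comm G (A [^] p) B = ?N" by (rule N.rcos_const[OF is_group u])
  have "?N #> (A \<otimes> comm G (A [^] p) B) = (?N #> A) \<otimes>\<^bsub>G Mod ?N\<^esub> (?N #> comm G (A [^] p) B)"
    by (rule pi.hom_mult[OF A uc])
  also have "\<dots> = (?N #> A) \<otimes>\<^bsub>G Mod ?N\<^esub> \<one>\<^bsub>G Mod ?N\<^esub>"
    by (simp only: piu one_FactGroup)
  also have "\<dots> = ?N #> A" by (rule pi.H.r_one[OF pi.hom_closed[OF A]])
  finally have e1: "?N #> (A \<otimes> comm G (A [^] p) B) = ?N #> A" .
  have "?N #> (A [^] p) = (?N #> A) [^]\<^bsub>G Mod ?N\<^esub> p" using A by (simp del: lower_central.simps add: pi.hom_nat_pow)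
  also have "\<dots> = (?N #> (A \<otimes> comm G (A [^] p) B)) [^]\<^bsub>G Mod ?N\<^esub> p" by (simp only: e1)
  also have "\<dots> = ?N #> ((A \<otimes> comm G (A [^] p) B) [^] p)" using A uc by (simp del: lower_central.simps add: pi.hom_nat_pow)
  also have "\<dots> = ?N" using rel N.subset by (simp del: lower_central.simps)
  finally have "?N #> (A [^] p) = ?N" .
  then show ?case using rcos_self[OF Ap N.subgroup_axioms] by simp
qed

definition phimap :: "nat \<Rightarrow> (bool \<times> bool) list set \<Rightarrow> (bool \<times> bool) list set" where
  "phimap p U = the_elem (image (pres_class UNIV (rels_C p)) U)"

interpretation F: group F2 by (rule group_F)

lemma gen_a_car: "gen_a \<in> carrier F2" by (simp add: carrier_F gen_a_def)
lemma gen_b_car: "gen_b \<in> carrier F2" by (simp add: carrier_F gen_b_def)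

lemma rels_G_car: "rels_G p \<subseteq> carrier F2"
  by (simp add: rels_G_def gen_a_car gen_b_car F.comm_closed)
lemma rels_C_car: "rels_C p \<subseteq> carrier F2"
  by (simp add: rels_C_def gen_a_car gen_b_car)

abbreviation "NG p \<equiv> normal_closure F2 (rels_G p)"
abbreviation "NC p \<equiv> normal_closure F2 (rels_C p)"

lemma NG_normal: "NG p \<lhd> F2" by (rule F.normal_closure_normal[OF rels_G_car])
lemma NC_normal: "NC p \<lhd> F2" by (rule F.normal_closure_normal[OF rels_C_car])

lemma G_grp_eq: "G_grp p = F2 Mod NG p" by (simp add: G_grp_def presented_group_def)
lemma CpCp_eq: "CpCp p = F2 Mod NC p" by (simp add: CpCp_def presented_group_def)

lemma group_G: "group (G_grp p)"
  unfolding G_grp_eq by (rule normal.factorgroup_is_group[OF NG_normal])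
lemma group_C: "group (CpCp p)"
  unfolding CpCp_eq by (rule normal.factorgroup_is_group[OF NC_normal])

lemma piG_gh: "group_hom F2 (G_grp p) (pres_class UNIV (rels_G p))"
  unfolding G_grp_eq pres_class_def
  by (rule mk_gh[OF group_F normal.factorgroup_is_group[OF NG_normal] normal.r_coset_hom_Mod[OF NG_normal]])
lemma piC_gh: "group_hom F2 (CpCp p) (pres_class UNIV (rels_C p))"
  unfolding CpCp_eq pres_class_def
  by (rule mk_gh[OF group_F normal.factorgroup_is_group[OF NC_normal] normal.r_coset_hom_Mod[OF NC_normal]])

lemma one_G: "\<one>\<^bsub>G_grp p\<^esub> = NG p" by (simp add: G_grp_eq)
lemma one_C: "\<one>\<^bsub>CpCp p\<^esub> = NC p" by (simp add: CpCp_eq)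

lemma class_eq_one_G: "w \<in> carrier F2 \<Longrightarrow> pres_class UNIV (rels_G p) w = \<one>\<^bsub>G_grp p\<^esub> \<longleftrightarrow> w \<in> NG p"
proof -
  assume w: "w \<in> carrier F2"
  have sg: "subgroup (NG p) F2" using NG_normal normal_imp_subgroup by blast
  show ?thesis
    unfolding one_G pres_class_def
    using F.rcos_self[OF w sg] subgroup.rcos_const[OF sg group_F] by auto
qed

lemma class_eq_one_C: "w \<in> carrier F2 \<Longrightarrow> pres_class UNIV (rels_C p) w = \<one>\<^bsub>CpCp p\<^esub> \<longleftrightarrow> w \<in> NC p"
proof -
  assume w: "w \<in> carrier F2"
  have sg: "subgroup (NC p) F2" using NC_normal normal_imp_subgroup by blast
  show ?thesis
    unfolding one_C pres_class_def
    using F.rcos_self[OF w sg] subgroup.rcos_const[OF sg group_F] by auto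
qed

lemma part1:
  fixes p :: nat
  assumes pr: "Factorial_Ring.prime p" and od: "odd p"
  shows "pres_class UNIV (rels_G p) gen_a [^]\<^bsub>G_grp p\<^esub> p \<noteq> \<one>\<^bsub>G_grp p\<^esub>"
proof
  assume contra: "pres_class UNIV (rels_G p) gen_a [^]\<^bsub>G_grp p\<^esub> p = \<one>\<^bsub>G_grp p\<^esub>"
  obtain n k :: int where n1: "n > 1" and kp: "k ^ p mod n = 1"
    and kp1: "(k ^ (p - 1) * int p) mod n = (int p - 1) mod n" and pn: "int p mod n \<noteq> 0"
    using number_theory[OF pr od] by blast
  have p1: "p \<ge> 1" using pr prime_ge_1_nat by blast
  let ?H = "BijGroup {0..<n}"
  define h where "h = (\<lambda>g::bool. if g then aff n k 0 else aff n 1 1)"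
  have pS: "p = Suc (p - 1)" using p1 by simp
  have uk: "unitm n k" unfolding unitm_def
  proof
    show "(k * k ^ (p - 1)) mod n = 1" using kp by (subst (asm) pS) simp
  qed
  have hc: "h g \<in> carrier ?H" for g
    unfolding h_def using aff_car[OF n1 uk] aff_car[OF n1 unitm_1[OF n1]] by simp
  interpret f: group_hom F2 ?H "ev ?H h"
    by (rule mk_gh[OF group_F group_BijGroup ev_hom[OF group_BijGroup hc]])
  have fa: "ev ?H h gen_a = aff n 1 1"
    unfolding gen_a_def using ev_gen[OF group_BijGroup hc, where g=False] by (simp add: h_def)
  have fb: "ev ?H h gen_b = aff n k 0"
    unfolding gen_b_def using ev_gen[OF group_BijGroup hc, where g=True] by (simp add: h_def)
  have "rels_G p \<subseteq> kernel F2 ?H (ev ?H h)"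
  proof
    fix r assume r: "r \<in> rels_G p"
    have rc: "r \<in> carrier F2" using r rels_G_car by blast
    have apc: "gen_a [^]\<^bsub>F2\<^esub> p \<in> carrier F2" using gen_a_car by simp
    have cc: "comm F2 (gen_a [^]\<^bsub>F2\<^esub> p) gen_b \<in> carrier F2"
      using apc gen_b_car by (rule F.comm_closed)
    have c1: "gen_a \<otimes>\<^bsub>F2\<^esub> comm F2 (gen_a [^]\<^bsub>F2\<^esub> p) gen_b \<in> carrier F2"
      using gen_a_car cc by simp
    have "ev ?H h ((gen_a \<otimes>\<^bsub>F2\<^esub> comm F2 (gen_a [^]\<^bsub>F2\<^esub> p) gen_b) [^]\<^bsub>F2\<^esub> p)
        = (aff n 1 1 \<otimes>\<^bsub>?H\<^esub> comm ?H (aff n 1 1 [^]\<^bsub>?H\<^esub> p) (aff n k 0)) [^]\<^bsub>?H\<^esub> p"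
      by (simp only: f.hom_nat_pow[OF c1] f.hom_mult[OF gen_a_car cc] f.hom_comm[OF apc gen_b_car]
          f.hom_nat_pow[OF gen_a_car] fa fb)
    also have "\<dots> = \<one>\<^bsub>?H\<^esub>" using main_rel(1)[OF n1 p1 kp kp1] by simp
    finally have 1: "ev ?H h ((gen_a \<otimes>\<^bsub>F2\<^esub> comm F2 (gen_a [^]\<^bsub>F2\<^esub> p) gen_b) [^]\<^bsub>F2\<^esub> p) = \<one>\<^bsub>?H\<^esub>" .
    have 2: "ev ?H h (gen_b [^]\<^bsub>F2\<^esub> p) = \<one>\<^bsub>?H\<^esub>"
      using main_rel(2)[OF n1 p1 kp kp1] by (simp add: f.hom_nat_pow[OF gen_b_car] fb)
    have "ev ?H h r = \<one>\<^bsub>?H\<^esub>" using r 1 2 by (auto simp: rels_G_def)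
    then show "r \<in> kernel F2 ?H (ev ?H h)" using rc by (simp add: kernel_def)
  qed
  then have NGk: "NG p \<subseteq> kernel F2 ?H (ev ?H h)"
    by (rule F.normal_closure_min[OF f.normal_kernel])
  interpret piG: group_hom F2 "G_grp p" "pres_class UNIV (rels_G p)" by (rule piG_gh)
  have "pres_class UNIV (rels_G p) (gen_a [^]\<^bsub>F2\<^esub> p) = \<one>\<^bsub>G_grp p\<^esub>"
    using contra gen_a_car by (simp add: piG.hom_nat_pow)
  then have "gen_a [^]\<^bsub>F2\<^esub> p \<in> NG p" using class_eq_one_G gen_a_car by simp
  then have "ev ?H h (gen_a [^]\<^bsub>F2\<^esub> p) = \<one>\<^bsub>?H\<^esub>" using NGk by (auto simp: kernel_def)
  then have "aff n 1 1 [^]\<^bsub>?H\<^esub> p = \<one>\<^bsub>?H\<^esub>" using gen_a_car by (simp add: f.hom_nat_pow fa)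
  then show False using A_pow_ne[OF n1 pn] by simp
qed

lemma r1_image:
  fixes p :: nat
  assumes gh: "group_hom F2 K f"
  shows "f ((gen_a \<otimes>\<^bsub>F2\<^esub> comm F2 (gen_a [^]\<^bsub>F2\<^esub> p) gen_b) [^]\<^bsub>F2\<^esub> p)
     = (f gen_a \<otimes>\<^bsub>K\<^esub> comm K (f gen_a [^]\<^bsub>K\<^esub> p) (f gen_b)) [^]\<^bsub>K\<^esub> p"
proof -
  interpret f: group_hom F2 K f by (rule gh)
  have apc: "gen_a [^]\<^bsub>F2\<^esub> p \<in> carrier F2" by (rule F.nat_pow_closed[OF gen_a_car])
  have cc: "comm F2 (gen_a [^]\<^bsub>F2\<^esub> p) gen_b \<in> carrier F2"
    using apc gen_b_car by (rule F.comm_closed)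
  have c1: "gen_a \<otimes>\<^bsub>F2\<^esub> comm F2 (gen_a [^]\<^bsub>F2\<^esub> p) gen_b \<in> carrier F2"
    using gen_a_car cc by simp
  show ?thesis
    by (simp only: f.hom_nat_pow[OF c1] f.hom_mult[OF gen_a_car cc] f.hom_comm[OF apc gen_b_car]
          f.hom_nat_pow[OF gen_a_car])
qed

lemma NG_sub_NC: "NG p \<subseteq> NC p"
proof (rule F.normal_closure_min[OF NC_normal])
  interpret piC: group_hom F2 "CpCp p" "pres_class UNIV (rels_C p)" by (rule piC_gh)
  have inc: "rels_C p \<subseteq> NC p" by (rule F.normal_closure_incl[OF rels_C_car])
  have bp: "gen_b [^]\<^bsub>F2\<^esub> p \<in> NC p" using inc by (auto simp: rels_C_def)
  have ap: "gen_a [^]\<^bsub>F2\<^esub> p \<in> NC p" using inc by (auto simp: rels_C_def)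
  have apc: "gen_a [^]\<^bsub>F2\<^esub> p \<in> carrier F2" by (rule F.nat_pow_closed[OF gen_a_car])
  let ?A = "pres_class UNIV (rels_C p) gen_a" and ?B = "pres_class UNIV (rels_C p) gen_b"
  have Ac: "?A \<in> carrier (CpCp p)" by (rule piC.hom_closed[OF gen_a_car])
  have Bc: "?B \<in> carrier (CpCp p)" by (rule piC.hom_closed[OF gen_b_car])
  have Ap: "?A [^]\<^bsub>CpCp p\<^esub> p = \<one>\<^bsub>CpCp p\<^esub>"
    using ap class_eq_one_C[OF apc, where p=p] piC.hom_nat_pow[OF gen_a_car, where n=p] by simp
  have "pres_class UNIV (rels_C p) ((gen_a \<otimes>\<^bsub>F2\<^esub> comm F2 (gen_a [^]\<^bsub>F2\<^esub> p) gen_b) [^]\<^bsub>F2\<^esub> p)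
      = (?A \<otimes>\<^bsub>CpCp p\<^esub> comm (CpCp p) (?A [^]\<^bsub>CpCp p\<^esub> p) ?B) [^]\<^bsub>CpCp p\<^esub> p"
    by (rule r1_image[OF piC_gh])
  also have "\<dots> = (?A \<otimes>\<^bsub>CpCp p\<^esub> \<one>\<^bsub>CpCp p\<^esub>) [^]\<^bsub>CpCp p\<^esub> p"
    by (simp only: Ap piC.H.comm_one_left[OF Bc])
  also have "\<dots> = \<one>\<^bsub>CpCp p\<^esub>" by (simp only: piC.H.r_one[OF Ac] Ap)
  finally have e: "pres_class UNIV (rels_C p) ((gen_a \<otimes>\<^bsub>F2\<^esub> comm F2 (gen_a [^]\<^bsub>F2\<^esub> p) gen_b) [^]\<^bsub>F2\<^esub> p) = \<one>\<^bsub>CpCp p\<^esub>" .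
  have c: "(gen_a \<otimes>\<^bsub>F2\<^esub> comm F2 (gen_a [^]\<^bsub>F2\<^esub> p) gen_b) [^]\<^bsub>F2\<^esub> p \<in> carrier F2"
    using gen_a_car gen_b_car apc F.comm_closed by simp
  have "(gen_a \<otimes>\<^bsub>F2\<^esub> comm F2 (gen_a [^]\<^bsub>F2\<^esub> p) gen_b) [^]\<^bsub>F2\<^esub> p \<in> NC p"
    using class_eq_one_C[OF c, where p=p] e by blast
  then show "rels_G p \<subseteq> NC p" using bp by (auto simp: rels_G_def)
qed


lemma phimap_class:
  assumes w: "w \<in> carrier F2"
  shows "phimap p (pres_class UNIV (rels_G p) w) = pres_class UNIV (rels_C p) w"
proof -
  have sgG: "subgroup (NG p) F2" using NG_normal normal_imp_subgroup by blast
  have sgC: "subgroup (NC p) F2" using NC_normal normal_imp_subgroup by blast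
  have "pres_class UNIV (rels_C p) ` pres_class UNIV (rels_G p) w = {pres_class UNIV (rels_C p) w}"
  proof
    show "pres_class UNIV (rels_C p) ` pres_class UNIV (rels_G p) w \<subseteq> {pres_class UNIV (rels_C p) w}"
    proof
      fix y assume "y \<in> pres_class UNIV (rels_C p) ` pres_class UNIV (rels_G p) w"
      then obtain x where x: "x \<in> NG p" and y: "y = NC p #>\<^bsub>F2\<^esub> (x \<otimes>\<^bsub>F2\<^esub> w)"
        unfolding pres_class_def r_coset_def by auto
      have xC: "x \<in> NC p" using x NG_sub_NC by blast
      have xc: "x \<in> carrier F2" using xC subgroup.subset[OF sgC] by blast
      have "y = (NC p #>\<^bsub>F2\<^esub> x) #>\<^bsub>F2\<^esub> w"
        using y F.coset_mult_assoc[OF subgroup.subset[OF sgC] xc w] by simp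
      also have "\<dots> = NC p #>\<^bsub>F2\<^esub> w" using subgroup.rcos_const[OF sgC group_F xC] by simp
      finally show "y \<in> {pres_class UNIV (rels_C p) w}" by (simp add: pres_class_def)
    qed
    show "{pres_class UNIV (rels_C p) w} \<subseteq> pres_class UNIV (rels_C p) ` pres_class UNIV (rels_G p) w"
      using F.rcos_self[OF w sgG] by (auto simp: pres_class_def)
  qed
  then show ?thesis by (simp add: phimap_def)
qed

lemma carrier_G: "carrier (G_grp p) = pres_class UNIV (rels_G p) ` carrier F2"
  by (simp add: G_grp_eq carrier_FactGroup pres_class_def)
lemma carrier_C: "carrier (CpCp p) = pres_class UNIV (rels_C p) ` carrier F2"
  by (simp add: CpCp_eq carrier_FactGroup pres_class_def)

lemma phimap_epi: "phimap p \<in> epi (G_grp p) (CpCp p)"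
proof -
  interpret piG: group_hom F2 "G_grp p" "pres_class UNIV (rels_G p)" by (rule piG_gh)
  interpret piC: group_hom F2 "CpCp p" "pres_class UNIV (rels_C p)" by (rule piC_gh)
  have hom: "phimap p \<in> hom (G_grp p) (CpCp p)"
  proof (rule homI)
    fix U assume "U \<in> carrier (G_grp p)"
    then obtain x where x: "x \<in> carrier F2" and U: "U = pres_class UNIV (rels_G p) x"
      by (auto simp: carrier_G)
    show "phimap p U \<in> carrier (CpCp p)" using x by (simp add: U phimap_class)
  next
    fix U V assume "U \<in> carrier (G_grp p)" "V \<in> carrier (G_grp p)"
    then obtain x y where x: "x \<in> carrier F2" and U: "U = pres_class UNIV (rels_G p) x"
      and y: "y \<in> carrier F2" and V: "V = pres_class UNIV (rels_G p) y"
      by (auto simp: carrier_G)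
    show "phimap p (U \<otimes>\<^bsub>G_grp p\<^esub> V) = phimap p U \<otimes>\<^bsub>CpCp p\<^esub> phimap p V"
    proof -
      have "phimap p (U \<otimes>\<^bsub>G_grp p\<^esub> V) = phimap p (pres_class UNIV (rels_G p) (x \<otimes>\<^bsub>F2\<^esub> y))"
        by (simp only: U V piG.hom_mult[OF x y, symmetric])
      also have "\<dots> = pres_class UNIV (rels_C p) (x \<otimes>\<^bsub>F2\<^esub> y)"
        by (rule phimap_class) (rule F.m_closed[OF x y])
      also have "\<dots> = phimap p U \<otimes>\<^bsub>CpCp p\<^esub> phimap p V"
        using x y by (simp add: U V phimap_class piC.hom_mult)
      finally show ?thesis .
    qed
  qed
  have "phimap p ` carrier (G_grp p) = carrier (CpCp p)"
  proof -
    have "phimap p ` carrier (G_grp p) = (\<lambda>w. phimap p (pres_class UNIV (rels_G p) w)) ` carrier F2"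
      by (simp only: carrier_G image_image)
    also have "\<dots> = pres_class UNIV (rels_C p) ` carrier F2"
      by (rule image_cong[OF refl]) (rule phimap_class)
    finally show ?thesis by (simp only: carrier_C)
  qed
  then show ?thesis using hom by (simp add: epi_def)
qed

theorem mainTheorem11:
  fixes p :: nat
  assumes "Factorial_Ring.prime p" and "odd p"
  shows "pres_class UNIV (rels_G p) gen_a [^]\<^bsub>G_grp p\<^esub> p \<noteq> \<one>\<^bsub>G_grp p\<^esub>
    \<and> (\<exists>\<phi>. \<phi> \<in> epi (G_grp p) (CpCp p)
           \<and> \<phi> (pres_class UNIV (rels_G p) gen_a) = pres_class UNIV (rels_C p) gen_a
           \<and> \<phi> (pres_class UNIV (rels_G p) gen_b) = pres_class UNIV (rels_C p) gen_b)
    \<and> (\<forall>\<phi>. \<phi> \<in> hom (G_grp p) (CpCp p)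
           \<and> \<phi> (pres_class UNIV (rels_G p) gen_a) = pres_class UNIV (rels_C p) gen_a
           \<and> \<phi> (pres_class UNIV (rels_G p) gen_b) = pres_class UNIV (rels_C p) gen_b
           \<longrightarrow> kernel (G_grp p) (CpCp p) \<phi> \<noteq> {\<one>\<^bsub>G_grp p\<^esub>})
    \<and> \<not> residually_nilpotent (G_grp p)"
proof (intro conjI)
  have P1: "pres_class UNIV (rels_G p) gen_a [^]\<^bsub>G_grp p\<^esub> p \<noteq> \<one>\<^bsub>G_grp p\<^esub>"
    by (rule part1[OF assms])
  then show "pres_class UNIV (rels_G p) gen_a [^]\<^bsub>G_grp p\<^esub> p \<noteq> \<one>\<^bsub>G_grp p\<^esub>" .
  interpret piG: group_hom F2 "G_grp p" "pres_class UNIV (rels_G p)" by (rule piG_gh)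
  interpret piC: group_hom F2 "CpCp p" "pres_class UNIV (rels_C p)" by (rule piC_gh)
  let ?A = "pres_class UNIV (rels_G p) gen_a" and ?B = "pres_class UNIV (rels_G p) gen_b"
  have Ac: "?A \<in> carrier (G_grp p)" by (rule piG.hom_closed[OF gen_a_car])
  have Bc: "?B \<in> carrier (G_grp p)" by (rule piG.hom_closed[OF gen_b_car])
  show "\<exists>\<phi>. \<phi> \<in> epi (G_grp p) (CpCp p)
           \<and> \<phi> (pres_class UNIV (rels_G p) gen_a) = pres_class UNIV (rels_C p) gen_a
           \<and> \<phi> (pres_class UNIV (rels_G p) gen_b) = pres_class UNIV (rels_C p) gen_b"
    by (intro exI[of _ "phimap p"] conjI phimap_epi phimap_class gen_a_car gen_b_car)
  show "\<forall>\<phi>. \<phi> \<in> hom (G_grp p) (CpCp p)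
           \<and> \<phi> (pres_class UNIV (rels_G p) gen_a) = pres_class UNIV (rels_C p) gen_a
           \<and> \<phi> (pres_class UNIV (rels_G p) gen_b) = pres_class UNIV (rels_C p) gen_b
           \<longrightarrow> kernel (G_grp p) (CpCp p) \<phi> \<noteq> {\<one>\<^bsub>G_grp p\<^esub>}"
  proof (intro allI impI)
    fix \<phi> assume h: "\<phi> \<in> hom (G_grp p) (CpCp p)
           \<and> \<phi> (pres_class UNIV (rels_G p) gen_a) = pres_class UNIV (rels_C p) gen_a
           \<and> \<phi> (pres_class UNIV (rels_G p) gen_b) = pres_class UNIV (rels_C p) gen_b"
    interpret ph: group_hom "G_grp p" "CpCp p" \<phi> by (rule mk_gh[OF group_G group_C]) (use h in blast)
    have apc: "gen_a [^]\<^bsub>F2\<^esub> p \<in> carrier F2" by (rule F.nat_pow_closed[OF gen_a_car])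
    have ap: "gen_a [^]\<^bsub>F2\<^esub> p \<in> NC p"
      using F.normal_closure_incl[OF rels_C_car, of p] by (auto simp: rels_C_def)
    have "\<phi> (?A [^]\<^bsub>G_grp p\<^esub> p) = pres_class UNIV (rels_C p) gen_a [^]\<^bsub>CpCp p\<^esub> p"
      using ph.hom_nat_pow[OF Ac, of p] h by simp
    also have "\<dots> = pres_class UNIV (rels_C p) (gen_a [^]\<^bsub>F2\<^esub> p)"
      by (rule piC.hom_nat_pow[OF gen_a_car, symmetric])
    also have "\<dots> = \<one>\<^bsub>CpCp p\<^esub>" using class_eq_one_C[OF apc, where p=p] ap by blast
    finally have "?A [^]\<^bsub>G_grp p\<^esub> p \<in> kernel (G_grp p) (CpCp p) \<phi>"
      using Ac by (simp add: kernel_def)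
    then show "kernel (G_grp p) (CpCp p) \<phi> \<noteq> {\<one>\<^bsub>G_grp p\<^esub>}" using P1 by blast
  qed
  show "\<not> residually_nilpotent (G_grp p)"
  proof
    assume rn: "residually_nilpotent (G_grp p)"
    have r1: "(gen_a \<otimes>\<^bsub>F2\<^esub> comm F2 (gen_a [^]\<^bsub>F2\<^esub> p) gen_b) [^]\<^bsub>F2\<^esub> p \<in> NG p"
      using F.normal_closure_incl[OF rels_G_car, of p] by (auto simp: rels_G_def)
    have c: "(gen_a \<otimes>\<^bsub>F2\<^esub> comm F2 (gen_a [^]\<^bsub>F2\<^esub> p) gen_b) [^]\<^bsub>F2\<^esub> p \<in> carrier F2"
      using r1 rels_G_car[of p] by (auto simp: rels_G_def)
    have "(?A \<otimes>\<^bsub>G_grp p\<^esub> comm (G_grp p) (?A [^]\<^bsub>G_grp p\<^esub> p) ?B) [^]\<^bsub>G_grp p\<^esub> p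
        = pres_class UNIV (rels_G p) ((gen_a \<otimes>\<^bsub>F2\<^esub> comm F2 (gen_a [^]\<^bsub>F2\<^esub> p) gen_b) [^]\<^bsub>F2\<^esub> p)"
      by (rule r1_image[OF piG_gh, symmetric])
    also have "\<dots> = \<one>\<^bsub>G_grp p\<^esub>" using class_eq_one_G[OF c, where p=p] r1 by blast
    finally have rel: "(?A \<otimes>\<^bsub>G_grp p\<^esub> comm (G_grp p) (?A [^]\<^bsub>G_grp p\<^esub> p) ?B) [^]\<^bsub>G_grp p\<^esub> p = \<one>\<^bsub>G_grp p\<^esub>" .
    have "?A [^]\<^bsub>G_grp p\<^esub> p \<in> (\<Inter>k. lower_central (G_grp p) k)"
      using piG.H.pow_in_lower_central[OF Ac Bc rel] by blast
    then show False using rn P1 unfolding residually_nilpotent_def by blast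
  qed
qed

end
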